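(* Suppose Assumption 5 holds. Fix $\sigma,\tilde\sigma\in\Delta X$ and for $\beta\in[0,1]$ let $\sigma_\beta=\beta\sigma+(1-\beta)\tilde\sigma$. Then: (i) if $\theta(\sigma)=\theta(\tilde\sigma)$, then $\theta(\sigma_\beta)=\theta(\sigma)$ for all $\beta\in[0,1]$; (ii) if $\theta(\tilde\sigma)<\theta(\sigma)$, then $\beta\mapsto\theta(\sigma_\beta)$ is weakly increasing on $[0,1]$; (iii) if $\theta(\tilde\sigma)<\theta(\sigma)$, then $\theta(\sigma_{\beta_1})<\theta(\sigma_{\beta_2})$ for all $\beta_1<\beta_2$ in $[0,1]$ with $\theta(\sigma_{\beta_1})\in(0,1)$.
   Context: Setting. $X$ is a finite set of actions, $Y$ a set of consequences, $Q:X\to\Delta Y$ the true consequence function, and $\{Q_\theta:\theta\in\Theta\}$ the agent's models with $\Theta=[0,1]$. Assumptions 1–2 hold: $Y$ is a compact subset of a Euclidean space; there is a Borel probability measure $\nu$ on $Y$ with $Q(\cdot\mid x),Q_\theta(\cdot\mid x)\ll\nu$, densities $q(\cdot\mid x)$, $q_\theta(\cdot\mid x)$; $\theta\mapsto q_\theta(\cdot\mid x)$ is continuous $Q(\cdot\mid x)$-a.s.; and for each $x$ there is $g_x\in L^2(Y,Q(\cdot\mid x))$ with $|\ln(q(y\mid x)/q_\theta(y\mid x))|\le g_x(y)$ for all $\theta$, $Q(\cdot\mid x)$-a.s. KLD: for $\sigma\in\Delta X$ (distributions on $X$), $K(\theta,\sigma)=\sum_x\sigma(x)\int\ln\frac{q(y\mid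 x)}{q_\theta(y\mid x)}q(y\mid x)\nu(dy)$. Assumption 5 (identifiability): (i) for each $\sigma\in\Delta X$, $\theta\mapsto K(\theta,\sigma)$ has a unique minimizer on $[0,1]$, denoted $\theta(\sigma)$; (ii) for each $\sigma$ with $\theta(\sigma)\in(0,1)$, $K(\cdot,\sigma)$ is twice differentiable at $\theta(\sigma)$ and $\frac{\partial^2K(\theta,\sigma)}{\partial\theta^2}\big|_{\theta=\theta(\sigma)}>0$. *)

theory Defs
  imports "HOL-Probability.Probability"
begin

(* Delta X = DeltaX.
   - Consequences Y :: 'y set, 'y a Euclidean space.
   - q x y = q(y|x) (true density),  qt th x y = q_th(y|x) (model density),
     both w.r.t. the Borel probability measure nu on Y.
   - Theta = [0,1]; qt is only constrained for th in {0..1}. *)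

definition DeltaX :: "('x::finite \<Rightarrow> real) set" where
  "DeltaX = {\<sigma>. (\<forall>x. 0 \<le> \<sigma> x) \<and> sum \<sigma> UNIV = 1}"

definition Qm :: "'y measure \<Rightarrow> ('y \<Rightarrow> real) \<Rightarrow> 'y measure" where
  "Qm nu f = density nu (\<lambda>y. ennreal (f y))"

definition is_density :: "'y measure \<Rightarrow> ('y \<Rightarrow> real) \<Rightarrow> bool" where
  "is_density nu f \<longleftrightarrow> f \<in> borel_measurable nu \<and> (\<forall>y\<in>space nu. 0 \<le> f y)
      \<and> (\<integral>\<^sup>+ y. ennreal (f y) \<partial>nu) = 1"

definition assumptions_1_2 ::
  "'y::euclidean_space set \<Rightarrow> 'y measure \<Rightarrow> ('x::finite \<Rightarrow> 'y \<Rightarrow> real)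
     \<Rightarrow> (real \<Rightarrow> 'x \<Rightarrow> 'y \<Rightarrow> real) \<Rightarrow> bool" where
  "assumptions_1_2 Y nu q qt \<longleftrightarrow>
     compact Y \<and> prob_space nu \<and> sets nu = sets (restrict_space borel Y) \<and>
     (\<forall>x. is_density nu (q x)) \<and>
     (\<forall>x. \<forall>th\<in>{0..1}. is_density nu (qt th x)) \<and>
     (\<forall>x. AE y in Qm nu (q x). continuous_on {0..1} (\<lambda>th. qt th x y)) \<and>
     (\<forall>x. \<exists>g. g \<in> borel_measurable nu \<and> integrable (Qm nu (q x)) (\<lambda>y. (g y)\<^sup>2) \<and>
          (AE y in Qm nu (q x). \<forall>th\<in>{0..1}. 0 < qt th x y \<and>
               \<bar>ln (q x y / qt th x y)\<bar> \<le> g y))"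

definition KLD :: "'y measure \<Rightarrow> ('x::finite \<Rightarrow> 'y \<Rightarrow> real)
     \<Rightarrow> (real \<Rightarrow> 'x \<Rightarrow> 'y \<Rightarrow> real) \<Rightarrow> real \<Rightarrow> ('x \<Rightarrow> real) \<Rightarrow> real" where
  "KLD nu q qt th \<sigma> = (\<Sum>x\<in>UNIV. \<sigma> x * (\<integral>y. ln (q x y / qt th x y) * q x y \<partial>nu))"

definition is_KLD_min where
  "is_KLD_min nu q qt \<sigma> t \<longleftrightarrow> t \<in> {0..1} \<and> (\<forall>s\<in>{0..1}. KLD nu q qt t \<sigma> \<le> KLD nu q qt s \<sigma>)"

text \<open>theta(sigma): the (unique, under Assumption 5) minimizer of K(., sigma) on [0,1].\<close>
definition theta_of where
  "theta_of nu q qt \<sigma> = (THE t. is_KLD_min nu q qt \<sigma> t)"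

definition assumption_5 where
  "assumption_5 nu q qt \<longleftrightarrow>
     (\<forall>\<sigma>\<in>DeltaX. \<exists>!t. is_KLD_min nu q qt \<sigma> t) \<and>
     (\<forall>\<sigma>\<in>DeltaX. theta_of nu q qt \<sigma> \<in> {0<..<1} \<longrightarrow>
        (\<exists>D. (\<forall>\<^sub>F t in nhds (theta_of nu q qt \<sigma>). (\<lambda>s. KLD nu q qt s \<sigma>) differentiable at t)
           \<and> (deriv (\<lambda>s. KLD nu q qt s \<sigma>) has_real_derivative D) (at (theta_of nu q qt \<sigma>))
           \<and> D > 0))"

end

theory Submission imports Defs "HOL-Real_Asymp.Real_Asymp" begin

definition FF :: "(real \<Rightarrow> real) \<Rightarrow> (real \<Rightarrow> real) \<Rightarrow> real \<Rightarrow> real \<Rightarrow> real" where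
  "FF f g \<beta> s = \<beta> * f s + (1 - \<beta>) * g s"

lemma aff_between:
  fixes A B b1 b2 b :: real
  assumes "0 \<le> A + b1 * B" "0 \<le> A + b2 * B" "b1 \<le> b" "b \<le> b2"
  shows "0 \<le> A + b * B"
proof (cases "0 \<le> B")
  case True
  then have "b1 * B \<le> b * B" using assms(3) by (simp add: mult_right_mono)
  then show ?thesis using assms(1) by linarith
next
  case False
  then have "b2 * B \<le> b * B" using assms(4) by (simp add: mult_right_mono_neg)
  then show ?thesis using assms(2) by linarith
qed

locale mcs =
  fixes f g m :: "real \<Rightarrow> real"
  assumes cf: "continuous_on {0..1} f" and cg: "continuous_on {0..1} g"
    and mmin: "\<And>\<beta>. \<beta> \<in> {0..1} \<Longrightarrow> m \<beta> \<in> {0..1}"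
    and mle: "\<And>\<beta> s. \<beta> \<in> {0..1} \<Longrightarrow> s \<in> {0..1} \<Longrightarrow> FF f g \<beta> (m \<beta>) \<le> FF f g \<beta> s"
    and muniq: "\<And>\<beta> t. \<beta> \<in> {0..1} \<Longrightarrow> t \<in> {0..1} \<Longrightarrow> (\<forall>s\<in>{0..1}. FF f g \<beta> t \<le> FF f g \<beta> s) \<Longrightarrow> t = m \<beta>"
    and mder: "\<And>\<beta>. \<beta> \<in> {0..1} \<Longrightarrow> m \<beta> \<in> {0<..<1} \<Longrightarrow> \<exists>D. (\<forall>\<^sub>F t in nhds (m \<beta>). FF f g \<beta> differentiable at t)
           \<and> (deriv (FF f g \<beta>) has_real_derivative D) (at (m \<beta>)) \<and> D > 0"
begin

lemma convex_level:
  assumes "\<beta>1 \<in> {0..1}" "\<beta>2 \<in> {0..1}" "\<beta>1 \<le> \<beta>" "\<beta> \<le> \<beta>2" "m \<beta>1 = t" "m \<beta>2 = t"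
  shows "m \<beta> = t"
proof -
  have b: "\<beta> \<in> {0..1}" using assms by auto
  have t: "t \<in> {0..1}" using mmin assms by blast
  have "\<forall>s\<in>{0..1}. FF f g \<beta> t \<le> FF f g \<beta> s"
  proof
    fix s :: real assume s: "s \<in> {0..1}"
    let ?A = "g s - g t" and ?B = "(f s - g s) - (f t - g t)"
    have e: "\<And>b. FF f g b s - FF f g b t = ?A + b * ?B" by (simp add: FF_def algebra_simps)
    have "0 \<le> ?A + \<beta>1 * ?B" using mle[OF assms(1) s] e[of \<beta>1] unfolding assms(5) by linarith
    moreover have "0 \<le> ?A + \<beta>2 * ?B" using mle[OF assms(2) s] e[of \<beta>2] unfolding assms(6) by linarith
    ultimately have "0 \<le> ?A + \<beta> * ?B" using aff_between assms(3,4) by blast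
    then show "FF f g \<beta> t \<le> FF f g \<beta> s" using e[of \<beta>] by linarith
  qed
  then show ?thesis using muniq[OF b t] by simp
qed

lemma graph_eq: "(\<lambda>x. (x, m x)) ` {0..1} = {p\<in>{0..1}\<times>{0..1}. \<forall>s\<in>{0..1}. FF f g (fst p) (snd p) \<le> FF f g (fst p) s}"
proof
  show "(\<lambda>x. (x, m x)) ` {0..1} \<subseteq> {p\<in>{0..1}\<times>{0..1}. \<forall>s\<in>{0..1}. FF f g (fst p) (snd p) \<le> FF f g (fst p) s}" using mmin mle by auto
  show "{p\<in>{0..1}\<times>{0..1}. \<forall>s\<in>{0..1}. FF f g (fst p) (snd p) \<le> FF f g (fst p) s} \<subseteq> (\<lambda>x. (x, m x)) ` {0..1}"
    using muniq by (force simp: image_iff)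
qed

lemma FF_cont: "continuous_on ({0..1}\<times>{0..1}) (\<lambda>p. FF f g (fst p) (snd p))"
proof -
  have 1: "continuous_on ({0..1}\<times>{0..1}) (\<lambda>p::real\<times>real. f (snd p))"
    by (rule continuous_on_compose2[OF cf continuous_on_snd]) auto
  have 2: "continuous_on ({0..1}\<times>{0..1}) (\<lambda>p::real\<times>real. g (snd p))"
    by (rule continuous_on_compose2[OF cg continuous_on_snd]) auto
  show ?thesis unfolding FF_def by (intro continuous_intros 1 2)
qed

lemma m_cont: "continuous_on {0..1} m"
proof (rule continuous_from_closed_graph[of "{0..1}"])
  show "m \<in> {0..1} \<rightarrow> {0..1}" using mmin by auto
  have eq: "{p\<in>{0..1}\<times>{0..1}. \<forall>s\<in>{0..1}. FF f g (fst p) (snd p) \<le> FF f g (fst p) s}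
     = ({0..1}\<times>{0..1}) \<inter> (\<Inter>s\<in>{0..1}. ({0..1}\<times>{0..1}) \<inter> (\<lambda>p. FF f g (fst p) s - FF f g (fst p) (snd p)) -` {0..})"
    by auto
  have "closed (({0..1}\<times>{0..1}) \<inter> (\<lambda>p. FF f g (fst p) s - FF f g (fst p) (snd p)) -` {0..})" if s: "s \<in> {0..1}" for s :: real
  proof (rule continuous_closed_preimage)
    have c1: "continuous_on ({0..1}\<times>{0..1}) (\<lambda>p::real\<times>real. FF f g (fst p) s)"
      unfolding FF_def by (intro continuous_intros)
    show "continuous_on ({0..1}\<times>{0..1}) (\<lambda>p. FF f g (fst p) s - FF f g (fst p) (snd p))"
      by (intro continuous_intros c1 FF_cont)
  qed (auto intro: closed_Times)
  then have "closed (({0..1}\<times>{0..1::real}) \<inter> (\<Inter>s\<in>{0..1}. ({0..1}\<times>{0..1}) \<inter> (\<lambda>p. FF f g (fst p) s - FF f g (fst p) (snd p)) -` {0..}))"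
    by (intro closed_Int closed_INT) (auto intro: closed_Times)
  then show "closed ((\<lambda>x. (x, m x)) ` {0..1})" unfolding graph_eq eq .
qed auto


lemma m_mono:
  assumes "m 0 < m 1"
  shows "mono_on {0..1} m"
proof (rule mono_onI)
  fix r s :: real assume r: "r \<in> {0..1}" and s: "s \<in> {0..1}" and rs: "r \<le> s"
  show "m r \<le> m s"
  proof (rule ccontr)
    assume "\<not> m r \<le> m s"
    then have lt: "m s < m r" by simp
    define c where "c = (m r + m s) / 2"
    have c1: "m s < c" "c < m r" using lt by (auto simp: c_def)
    have cont: "\<And>a b. a \<in> {0..1} \<Longrightarrow> b \<in> {0..1} \<Longrightarrow> continuous_on {a..b} m"
      by (rule continuous_on_subset[OF m_cont]) auto
    obtain z2 where z2: "r \<le> z2" "z2 \<le> s" "m z2 = c"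
      using IVT2'[of m s c r, OF _ _ rs cont[OF r s]] c1 by auto
    show False
    proof (cases "m 0 \<le> c")
      case True
      obtain z1 where z1: "0 \<le> z1" "z1 \<le> r" "m z1 = c"
        using IVT'[of m 0 c r, OF True _ _ cont[of 0 r]] c1 r by auto
      have "m r = c" by (rule convex_level[of z1 z2]) (use z1 z2 r s in auto)
      then show False using c1 by simp
    next
      case False
      then have "m s \<le> c" "c \<le> m 1" using c1 assms by auto
      then obtain z3 where z3: "s \<le> z3" "z3 \<le> 1" "m z3 = c"
        using IVT'[of m s c 1, OF _ _ _ cont[of s 1]] s by auto
      have "m s = c" by (rule convex_level[of z2 z3]) (use z2 z3 r s in auto)
      then show False using c1 by simp
    qed
  qed
qed

lemma local_min_deriv:
  assumes "\<beta> \<in> {0..1}" "c \<in> {0<..<1}" "m \<beta> = c" "(FF f g \<beta> has_real_derivative l) (at c)"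
  shows "l = 0"
proof (rule DERIV_local_min[OF assms(4)])
  show "0 < min c (1 - c)" using assms(2) by auto
  show "\<forall>y. \<bar>c - y\<bar> < min c (1 - c) \<longrightarrow> FF f g \<beta> c \<le> FF f g \<beta> y"
    using mle[OF assms(1)] assms(3) by (auto simp: abs_if split: if_splits)
qed


lemma FF_affine:
  assumes "\<beta>' \<noteq> \<gamma>"
  shows "FF f g \<beta> = (\<lambda>s. FF f g \<gamma> s + ((\<beta> - \<gamma>) / (\<beta>' - \<gamma>)) * (FF f g \<beta>' s - FF f g \<gamma> s))"
proof
  fix s
  have "\<beta>' - \<gamma> \<noteq> 0" using assms by simp
  then show "FF f g \<beta> s = FF f g \<gamma> s + ((\<beta> - \<gamma>) / (\<beta>' - \<gamma>)) * (FF f g \<beta>' s - FF f g \<gamma> s)"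
    unfolding FF_def by (simp add: field_simps)
qed

lemma div_combo:
  fixes a b L c :: real
  assumes "a + L * (b - a) = 0" "c \<noteq> 0"
  shows "a / c + L * (b / c - a / c) = 0"
proof -
  have "a / c + L * (b / c - a / c) = (a + L * (b - a)) / c"
    by (simp add: diff_divide_distrib[symmetric] add_divide_distrib)
  then show ?thesis using assms by simp
qed

lemma quot_lim:
  fixes u :: "real \<Rightarrow> real"
  assumes "(u has_real_derivative D) (at t)" "u t = 0" "c \<longlonglongrightarrow> t" "\<forall>n. c n \<noteq> t"
  shows "(\<lambda>n. u (c n) / (c n - t)) \<longlonglongrightarrow> D"
proof -
  have "((\<lambda>y. (u y - u t) / (y - t)) \<longlongrightarrow> D) (at t)"
    using assms(1) by (simp add: has_field_derivative_iff)
  moreover have "filterlim c (at t) sequentially"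
    using assms(3,4) by (intro filterlim_atI) auto
  ultimately have "((\<lambda>n. (u (c n) - u t) / (c n - t)) \<longlongrightarrow> D) sequentially"
    by (rule filterlim_compose)
  then show ?thesis using assms(2) by simp
qed

lemma core:
  assumes g: "\<gamma> \<in> {0..1}" "m \<gamma> = t" and t: "t \<in> {0<..<1}"
    and b': "\<beta>' \<in> {0..1}" "\<beta>' \<noteq> \<gamma>" "m \<beta>' = t"
    and B: "\<forall>n. B n \<in> {0..1}" "B \<longlonglongrightarrow> \<gamma>" "(\<lambda>n. m (B n)) \<longlonglongrightarrow> t" "\<forall>n. m (B n) \<noteq> t"
  shows False
proof -
  obtain D where D: "\<forall>\<^sub>F s in nhds t. FF f g \<gamma> differentiable at s"
      "(deriv (FF f g \<gamma>) has_real_derivative D) (at t)" "D > 0"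
    using mder[OF g(1)] g(2) t by auto
  obtain D' where D': "\<forall>\<^sub>F s in nhds t. FF f g \<beta>' differentiable at s"
      "(deriv (FF f g \<beta>') has_real_derivative D') (at t)"
    using mder[OF b'(1)] b'(3) t by auto
  define u where "u = deriv (FF f g \<gamma>)"
  define v where "v = deriv (FF f g \<beta>')"
  have ev: "\<forall>\<^sub>F s in nhds t. FF f g \<gamma> differentiable at s \<and> FF f g \<beta>' differentiable at s \<and> s \<in> {0<..<1}"
  proof -
    have "\<forall>\<^sub>F y in nhds t. y \<in> {0<..<1::real}" by (rule eventually_nhds_in_open) (use t in auto)
    then show ?thesis using D(1) D'(1) by (intro eventually_conj)
  qed
  have "\<forall>\<^sub>F n in sequentially. FF f g \<gamma> differentiable at (m (B n)) \<and> FF f g \<beta>' differentiable at (m (B n)) \<and> m (B n) \<in> {0<..<1}"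
    using B(3) ev by (rule eventually_compose_filterlim[rotated])
  then have ev0: "\<forall>\<^sub>F n in sequentially. u (m (B n)) + ((B n - \<gamma>) / (\<beta>' - \<gamma>)) * (v (m (B n)) - u (m (B n))) = 0"
  proof (rule eventually_mono)
    fix n assume H: "FF f g \<gamma> differentiable at (m (B n)) \<and> FF f g \<beta>' differentiable at (m (B n)) \<and> m (B n) \<in> {0<..<1}"
    let ?c = "m (B n)"
    have du: "(FF f g \<gamma> has_real_derivative u ?c) (at ?c)"
      using H by (simp add: u_def DERIV_deriv_iff_real_differentiable)
    have dv: "(FF f g \<beta>' has_real_derivative v ?c) (at ?c)"
      using H by (simp add: v_def DERIV_deriv_iff_real_differentiable)
    have "((\<lambda>s. FF f g \<gamma> s + ((B n - \<gamma>) / (\<beta>' - \<gamma>)) * (FF f g \<beta>' s - FF f g \<gamma> s)) has_real_derivative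
            u ?c + ((B n - \<gamma>) / (\<beta>' - \<gamma>)) * (v ?c - u ?c)) (at ?c)"
      by (rule DERIV_add[OF du DERIV_cmult[OF DERIV_diff[OF dv du]]])
    then have "(FF f g (B n) has_real_derivative u ?c + ((B n - \<gamma>) / (\<beta>' - \<gamma>)) * (v ?c - u ?c)) (at ?c)"
      using FF_affine[OF b'(2), of "B n"] by simp
    then show "u ?c + ((B n - \<gamma>) / (\<beta>' - \<gamma>)) * (v ?c - u ?c) = 0"
      using local_min_deriv[OF B(1)[rule_format, of n]] H by auto
  qed
  have tu: "u t = 0"
  proof -
    have "FF f g \<gamma> differentiable at t" using D(1) by (rule eventually_nhds_x_imp_x)
    then have "(FF f g \<gamma> has_real_derivative u t) (at t)" by (simp add: u_def DERIV_deriv_iff_real_differentiable)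
    then show ?thesis using local_min_deriv[OF g(1) t g(2)] by simp
  qed
  have tv: "v t = 0"
  proof -
    have "FF f g \<beta>' differentiable at t" using D'(1) by (rule eventually_nhds_x_imp_x)
    then have "(FF f g \<beta>' has_real_derivative v t) (at t)" by (simp add: v_def DERIV_deriv_iff_real_differentiable)
    then show ?thesis using local_min_deriv[OF b'(1) t b'(3)] by simp
  qed
  have U: "(\<lambda>n. u (m (B n)) / (m (B n) - t)) \<longlonglongrightarrow> D"
    using quot_lim[OF D(2)[folded u_def] tu B(3) B(4)] .
  have V: "(\<lambda>n. v (m (B n)) / (m (B n) - t)) \<longlonglongrightarrow> D'"
    using quot_lim[OF D'(2)[folded v_def] tv B(3) B(4)] .
  have L: "(\<lambda>n. (B n - \<gamma>) / (\<beta>' - \<gamma>)) \<longlonglongrightarrow> 0"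
  proof -
    have "(\<lambda>n. (B n - \<gamma>) / (\<beta>' - \<gamma>)) \<longlonglongrightarrow> (\<gamma> - \<gamma>) / (\<beta>' - \<gamma>)"
      by (intro tendsto_intros B(2)) (use b'(2) in simp)
    then show ?thesis by simp
  qed
  have lim1: "(\<lambda>n. u (m (B n)) / (m (B n) - t) + ((B n - \<gamma>) / (\<beta>' - \<gamma>)) * (v (m (B n)) / (m (B n) - t) - u (m (B n)) / (m (B n) - t)))
        \<longlonglongrightarrow> D + 0 * (D' - D)"
    by (intro tendsto_intros U V L)
  have "\<forall>\<^sub>F n in sequentially. u (m (B n)) / (m (B n) - t) + ((B n - \<gamma>) / (\<beta>' - \<gamma>)) * (v (m (B n)) / (m (B n) - t) - u (m (B n)) / (m (B n) - t)) = 0"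
    using ev0
  proof (rule eventually_mono)
    fix n assume "u (m (B n)) + ((B n - \<gamma>) / (\<beta>' - \<gamma>)) * (v (m (B n)) - u (m (B n))) = 0"
    moreover have "m (B n) - t \<noteq> 0" using B(4) by auto
    ultimately show "u (m (B n)) / (m (B n) - t) + ((B n - \<gamma>) / (\<beta>' - \<gamma>)) * (v (m (B n)) / (m (B n) - t) - u (m (B n)) / (m (B n) - t)) = 0"
      by (rule div_combo)
  qed
  then have "(\<lambda>n. u (m (B n)) / (m (B n) - t) + ((B n - \<gamma>) / (\<beta>' - \<gamma>)) * (v (m (B n)) / (m (B n) - t) - u (m (B n)) / (m (B n) - t)))
        \<longlonglongrightarrow> 0" by (rule tendsto_eventually)
  then have "D + 0 * (D' - D) = 0" using lim1 LIMSEQ_unique by blast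
  then show False using D(3) by simp
qed


lemma m_strict:
  assumes mono01: "m 0 < m 1" and b1: "\<beta>1 \<in> {0..1}" and b2: "\<beta>2 \<in> {0..1}" and lt: "\<beta>1 < \<beta>2"
    and int: "m \<beta>1 \<in> {0<..<1}"
  shows "m \<beta>1 < m \<beta>2"
proof (rule ccontr)
  assume "\<not> m \<beta>1 < m \<beta>2"
  moreover have "m \<beta>1 \<le> m \<beta>2" by (rule mono_onD[OF m_mono[OF mono01] b1 b2]) (use lt in simp)
  ultimately have eq: "m \<beta>2 = m \<beta>1" by simp
  define t where "t = m \<beta>1"
  define Z where "Z = {0..1} \<inter> m -` {t}"
  have Zc: "closed Z" unfolding Z_def by (rule continuous_closed_preimage[OF m_cont]) auto
  have b1Z: "\<beta>1 \<in> Z" and b2Z: "\<beta>2 \<in> Z" using b1 b2 eq by (auto simp: Z_def t_def)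
  have Zsub: "Z \<subseteq> {0..1}" by (auto simp: Z_def)
  have tint: "t \<in> {0<..<1}" using int by (simp add: t_def)
  have mB: "(\<lambda>n. m (B n)) \<longlonglongrightarrow> m \<gamma>" if "\<forall>n. B n \<in> {0..1}" "B \<longlonglongrightarrow> \<gamma>" "\<gamma> \<in> {0..1}" for B \<gamma>
    using continuous_on_tendsto_compose[OF m_cont that(2) that(3)] that(1) by auto
  have m0: "m 0 \<le> t" unfolding t_def by (rule mono_onD[OF m_mono[OF mono01]]) (use b1 in auto)
  show False
  proof (cases "m 0 < t")
    case True
    define \<gamma> where "\<gamma> = Inf Z"
    have bddZ: "bdd_below Z" using Zsub by (intro bdd_belowI[of _ 0]) auto
    have gZ: "\<gamma> \<in> Z" unfolding \<gamma>_def
      by (rule closed_contains_Inf) (use b1Z Zc bddZ in auto)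
    have glow: "\<And>z. z \<in> Z \<Longrightarrow> \<gamma> \<le> z" unfolding \<gamma>_def using bddZ by (simp add: cInf_lower)
    have g01: "\<gamma> \<in> {0..1}" using gZ Zsub by auto
    have mg: "m \<gamma> = t" using gZ by (simp add: Z_def)
    have gpos: "0 < \<gamma>" using g01 mg True by (cases "\<gamma> = 0") auto
    define B where "B n = \<gamma> - \<gamma> / (real n + 2)" for n
    have Bin: "B n \<in> {0..1}" for n
    proof -
      have "\<gamma> / (real n + 2) \<le> \<gamma>" using gpos by (simp add: divide_le_eq)
      moreover have "0 \<le> \<gamma> / (real n + 2)" using gpos by simp
      ultimately show ?thesis using g01 by (auto simp: B_def)
    qed
    have Blt: "B n < \<gamma>" for n using gpos by (simp add: B_def)
    have Blim: "B \<longlonglongrightarrow> \<gamma>"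
    proof -
      have "(\<lambda>n. \<gamma> - \<gamma> / (real n + 2)) \<longlonglongrightarrow> \<gamma> - 0"
        by (intro tendsto_intros) real_asymp
      then show ?thesis by (simp add: B_def[abs_def])
    qed
    have Bne: "\<forall>n. m (B n) \<noteq> t"
    proof
      fix n show "m (B n) \<noteq> t"
      proof
        assume "m (B n) = t"
        then have "B n \<in> Z" using Bin by (simp add: Z_def)
        then show False using glow Blt[of n] by fastforce
      qed
    qed
    have "\<beta>2 \<noteq> \<gamma>" using glow[OF b1Z] lt by simp
    then show False
      using core[OF g01 mg tint b2 _ _ _ Blim _ Bne] eq Bin mB[OF _ Blim g01] mg
      by (auto simp: t_def)
  next
    case False
    then have m0t: "m 0 = t" using m0 by simp
    define \<gamma> where "\<gamma> = Sup Z"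
    have bddZ: "bdd_above Z" using Zsub by (intro bdd_aboveI[of _ 1]) auto
    have gZ: "\<gamma> \<in> Z" unfolding \<gamma>_def
      by (rule closed_contains_Sup) (use b1Z Zc bddZ in auto)
    have gup: "\<And>z. z \<in> Z \<Longrightarrow> z \<le> \<gamma>" unfolding \<gamma>_def using bddZ by (simp add: cSup_upper)
    have g01: "\<gamma> \<in> {0..1}" using gZ Zsub by auto
    have mg: "m \<gamma> = t" using gZ by (simp add: Z_def)
    have glt: "\<gamma> < 1" using g01 mg m0t mono01 by (cases "\<gamma> = 1") auto
    define B where "B n = \<gamma> + (1 - \<gamma>) / (real n + 2)" for n
    have Bin: "B n \<in> {0..1}" for n
    proof -
      have "(1 - \<gamma>) / (real n + 2) \<le> 1 - \<gamma>" using glt by (simp add: divide_le_eq)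
      moreover have "0 \<le> (1 - \<gamma>) / (real n + 2)" using glt by simp
      ultimately show ?thesis using g01 by (auto simp: B_def)
    qed
    have Bgt: "\<gamma> < B n" for n using glt by (simp add: B_def)
    have Blim: "B \<longlonglongrightarrow> \<gamma>"
    proof -
      have "(\<lambda>n. \<gamma> + (1 - \<gamma>) / (real n + 2)) \<longlonglongrightarrow> \<gamma> + 0"
        by (intro tendsto_intros) real_asymp
      then show ?thesis by (simp add: B_def[abs_def])
    qed
    have Bne: "\<forall>n. m (B n) \<noteq> t"
    proof
      fix n show "m (B n) \<noteq> t"
      proof
        assume "m (B n) = t"
        then have "B n \<in> Z" using Bin by (simp add: Z_def)
        then show False using gup Bgt[of n] by fastforce
      qed
    qed
    have "\<beta>1 \<noteq> \<gamma>" using gup[OF b2Z] lt by simp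
    then show False
      using core[OF g01 mg tint b1 _ _ _ Blim _ Bne] Bin mB[OF _ Blim g01] mg
      by (auto simp: t_def)
  qed
qed

end
lemma Icont:
  assumes A12: "assumptions_1_2 Y nu q qt"
  shows "continuous_on {0..1} (\<lambda>th. \<integral>y. ln (q x y / qt th x y) * q x y \<partial>nu)"
proof -
  define Q where "Q = Qm nu (q x)"
  have dq: "is_density nu (q x)" and dqt: "\<And>th. th \<in> {0..1} \<Longrightarrow> is_density nu (qt th x)"
    using A12 by (auto simp: assumptions_1_2_def)
  have qm: "q x \<in> borel_measurable nu" and qnn: "\<And>y. y \<in> space nu \<Longrightarrow> 0 \<le> q x y"
    and qint: "(\<integral>\<^sup>+ y. ennreal (q x y) \<partial>nu) = 1" using dq by (auto simp: is_density_def)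
  have qtm: "\<And>th. th \<in> {0..1} \<Longrightarrow> qt th x \<in> borel_measurable nu"
    using dqt by (auto simp: is_density_def)
  have sQ: "sets Q = sets nu" and spQ: "space Q = space nu" by (simp_all add: Q_def Qm_def)
  have lnm: "(\<lambda>y. ln (q x y / qt th x y)) \<in> borel_measurable nu" if "th \<in> {0..1}" for th
    using qm qtm[OF that] by measurable
  have lnmQ: "(\<lambda>y. ln (q x y / qt th x y)) \<in> borel_measurable Q" if "th \<in> {0..1}" for th
    using lnm[OF that] measurable_cong_sets[OF sQ refl] by blast
  have eqI: "(\<integral>y. ln (q x y / qt th x y) * q x y \<partial>nu) = (\<integral>y. ln (q x y / qt th x y) \<partial>Q)" if "th \<in> {0..1}" for th
  proof -
    have "(\<integral>y. ln (q x y / qt th x y) \<partial>Q) = (\<integral>y. q x y *\<^sub>R ln (q x y / qt th x y) \<partial>nu)"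
      unfolding Q_def Qm_def by (rule integral_density[OF lnm[OF that] qm]) (use qnn in auto)
    then show ?thesis by (simp add: mult.commute)
  qed
  have Qprob: "prob_space Q"
  proof
    show "emeasure Q (space Q) = 1"
      unfolding Q_def Qm_def using qint qm by (simp add: emeasure_density)
  qed
  then interpret Q: prob_space Q .
  obtain w where wm: "w \<in> borel_measurable nu" and w2: "integrable Q (\<lambda>y. (w y)\<^sup>2)"
    and wAE: "AE y in Q. \<forall>th\<in>{0..1}. 0 < qt th x y \<and> \<bar>ln (q x y / qt th x y)\<bar> \<le> w y"
    using A12 unfolding assumptions_1_2_def Q_def by blast
  have wmQ: "w \<in> borel_measurable Q" using wm measurable_cong_sets[OF sQ refl] by blast
  have cAE: "AE y in Q. continuous_on {0..1} (\<lambda>th. qt th x y)"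
    using A12 unfolding assumptions_1_2_def Q_def by blast
  have wint: "integrable Q w"
  proof (rule Bochner_Integration.integrable_bound[of Q "\<lambda>y. 1 + (w y)\<^sup>2"])
    show "integrable Q (\<lambda>y. 1 + (w y)\<^sup>2)" using w2 by simp
    show "w \<in> borel_measurable Q" by (rule wmQ)
    show "AE y in Q. norm (w y) \<le> norm (1 + (w y)\<^sup>2)"
    proof (rule AE_I2)
      fix y
      have "\<bar>w y\<bar> \<le> 1 + (w y)\<^sup>2"
      proof (cases "\<bar>w y\<bar> \<le> 1")
        case True then show ?thesis by (simp add: add_increasing2)
      next
        case False
        then have "\<bar>w y\<bar> * 1 \<le> \<bar>w y\<bar> * \<bar>w y\<bar>" by (intro mult_left_mono) auto
        then show ?thesis by (simp add: power2_eq_square abs_mult_self_eq)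
      qed
      then show "norm (w y) \<le> norm (1 + (w y)\<^sup>2)" by simp
    qed
  qed
  show ?thesis
  proof (rule continuous_on_sequentiallyI)
    fix u :: "nat \<Rightarrow> real" and a assume u: "\<forall>n. u n \<in> {0..1}" and a: "a \<in> {0..1}" and ua: "u \<longlonglongrightarrow> a"
    have "(\<lambda>n. \<integral>y. ln (q x y / qt (u n) x y) \<partial>Q) \<longlonglongrightarrow> (\<integral>y. ln (q x y / qt a x y) \<partial>Q)"
    proof (rule integral_dominated_convergence[where w=w])
      show "(\<lambda>y. ln (q x y / qt a x y)) \<in> borel_measurable Q" using lnmQ[OF a] .
      show "\<And>n. (\<lambda>y. ln (q x y / qt (u n) x y)) \<in> borel_measurable Q" using lnmQ u by blast
      show "integrable Q w" by (rule wint)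
      show "AE y in Q. (\<lambda>n. ln (q x y / qt (u n) x y)) \<longlonglongrightarrow> ln (q x y / qt a x y)"
        using wAE cAE
      proof eventually_elim
        case (elim y)
        have "(\<lambda>n. qt (u n) x y) \<longlonglongrightarrow> qt a x y"
          using continuous_on_tendsto_compose[OF elim(2) ua a] u by auto
        moreover have pos: "0 < qt a x y" using elim(1) a by auto
        ultimately have "(\<lambda>n. q x y / qt (u n) x y) \<longlonglongrightarrow> q x y / qt a x y"
          by (intro tendsto_intros) auto
        show ?case
        proof (cases "q x y = 0")
          case True then show ?thesis by simp
        next
          case False
          have "q x y / qt a x y \<noteq> 0" using False pos by simp
          then show ?thesis using \<open>(\<lambda>n. q x y / qt (u n) x y) \<longlonglongrightarrow> q x y / qt a x y\<close>
            by (intro tendsto_ln) auto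
        qed
      qed
      show "\<And>n. AE y in Q. norm (ln (q x y / qt (u n) x y)) \<le> w y"
        using wAE u by (auto elim: AE_mp)
    qed
    then show "(\<lambda>n. \<integral>y. ln (q x y / qt (u n) x y) * q x y \<partial>nu) \<longlonglongrightarrow> (\<integral>y. ln (q x y / qt a x y) * q x y \<partial>nu)"
      using eqI u a by simp
  qed
qed

lemma KLD_cont:
  assumes A12: "assumptions_1_2 Y nu q qt"
  shows "continuous_on {0..1} (\<lambda>th. KLD nu q qt th \<sigma>)"
  unfolding KLD_def by (intro continuous_intros Icont[OF A12])


theorem proposition5:
  fixes Y :: "'y::euclidean_space set" and nu :: "'y measure"
    and q :: "'x::finite \<Rightarrow> 'y \<Rightarrow> real" and qt :: "real \<Rightarrow> 'x \<Rightarrow> 'y \<Rightarrow> real"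
    and \<sigma> \<sigma>' :: "'x \<Rightarrow> real"
  assumes A12: "assumptions_1_2 Y nu q qt"
    and A5: "assumption_5 nu q qt"
    and s: "\<sigma> \<in> DeltaX" and s': "\<sigma>' \<in> DeltaX"
  defines "\<theta> \<equiv> theta_of nu q qt"
    and "\<sigma>\<^sub>b \<equiv> (\<lambda>\<beta>::real. \<lambda>x. \<beta> * \<sigma> x + (1 - \<beta>) * \<sigma>' x)"
  shows "(\<theta> \<sigma> = \<theta> \<sigma>' \<longrightarrow> (\<forall>\<beta>\<in>{0..1}. \<theta> (\<sigma>\<^sub>b \<beta>) = \<theta> \<sigma>))
       \<and> (\<theta> \<sigma>' < \<theta> \<sigma> \<longrightarrow> mono_on {0..1} (\<lambda>\<beta>. \<theta> (\<sigma>\<^sub>b \<beta>)))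
       \<and> (\<theta> \<sigma>' < \<theta> \<sigma> \<longrightarrow> (\<forall>\<beta>1\<in>{0..1}. \<forall>\<beta>2\<in>{0..1}. \<beta>1 < \<beta>2 \<longrightarrow>
             \<theta> (\<sigma>\<^sub>b \<beta>1) \<in> {0<..<1} \<longrightarrow> \<theta> (\<sigma>\<^sub>b \<beta>1) < \<theta> (\<sigma>\<^sub>b \<beta>2)))"
proof -
  define f where "f = (\<lambda>s. KLD nu q qt s \<sigma>)"
  define g where "g = (\<lambda>s. KLD nu q qt s \<sigma>')"
  define m where "m = (\<lambda>\<beta>. \<theta> (\<sigma>\<^sub>b \<beta>))"
  have Keq: "(\<lambda>s. KLD nu q qt s (\<sigma>\<^sub>b \<beta>)) = FF f g \<beta>" for \<beta>
  proof (rule ext)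
    fix t
    let ?I = "\<lambda>x. (\<integral>y. ln (q x y / qt t x y) * q x y \<partial>nu)"
    have "KLD nu q qt t (\<sigma>\<^sub>b \<beta>) = (\<Sum>x\<in>UNIV. \<beta> * (\<sigma> x * ?I x) + (1 - \<beta>) * (\<sigma>' x * ?I x))"
      unfolding KLD_def \<sigma>\<^sub>b_def by (rule sum.cong) (simp_all add: distrib_right)
    also have "\<dots> = \<beta> * (\<Sum>x\<in>UNIV. \<sigma> x * ?I x) + (1 - \<beta>) * (\<Sum>x\<in>UNIV. \<sigma>' x * ?I x)"
      by (simp add: sum.distrib sum_distrib_left)
    finally show "KLD nu q qt t (\<sigma>\<^sub>b \<beta>) = FF f g \<beta> t"
      by (simp add: FF_def f_def g_def KLD_def)
  qed
  have KeqP: "KLD nu q qt t (\<sigma>\<^sub>b \<beta>) = FF f g \<beta> t" for t \<beta>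
    using Keq[of \<beta>] by (rule fun_cong)
  have sD: "\<sigma>\<^sub>b \<beta> \<in> DeltaX" if "\<beta> \<in> {0..1}" for \<beta>
  proof -
    have "\<forall>x. 0 \<le> \<sigma>\<^sub>b \<beta> x" using s s' that by (auto simp: DeltaX_def \<sigma>\<^sub>b_def)
    moreover have "sum (\<sigma>\<^sub>b \<beta>) UNIV = 1"
      using s s' by (simp add: DeltaX_def \<sigma>\<^sub>b_def sum.distrib sum_distrib_left[symmetric])
    ultimately show ?thesis by (simp add: DeltaX_def)
  qed
  have ex1: "\<exists>!t. is_KLD_min nu q qt (\<sigma>\<^sub>b \<beta>) t" if "\<beta> \<in> {0..1}" for \<beta>
    using A5 sD[OF that] by (auto simp: assumption_5_def)
  have mmin: "is_KLD_min nu q qt (\<sigma>\<^sub>b \<beta>) (m \<beta>)" if "\<beta> \<in> {0..1}" for \<beta>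
    unfolding m_def \<theta>_def theta_of_def by (rule theI'[OF ex1[OF that]])
  interpret mcs f g m
  proof
    show "continuous_on {0..1} f" unfolding f_def by (rule KLD_cont[OF A12])
    show "continuous_on {0..1} g" unfolding g_def by (rule KLD_cont[OF A12])
    show "m \<beta> \<in> {0..1}" if "\<beta> \<in> {0..1}" for \<beta> using mmin[OF that] by (simp add: is_KLD_min_def)
    show "FF f g \<beta> (m \<beta>) \<le> FF f g \<beta> s" if "\<beta> \<in> {0..1}" "s \<in> {0..1}" for \<beta> s
      using mmin[OF that(1)] that(2) unfolding is_KLD_min_def KeqP by blast
    show "t = m \<beta>" if "\<beta> \<in> {0..1}" "t \<in> {0..1}" "\<forall>s\<in>{0..1}. FF f g \<beta> t \<le> FF f g \<beta> s" for \<beta> t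
    proof -
      have "is_KLD_min nu q qt (\<sigma>\<^sub>b \<beta>) t" using that unfolding is_KLD_min_def KeqP by blast
      then show ?thesis using mmin[OF that(1)] ex1[OF that(1)] by blast
    qed
    show "\<exists>D. (\<forall>\<^sub>F t in nhds (m \<beta>). FF f g \<beta> differentiable at t)
           \<and> (deriv (FF f g \<beta>) has_real_derivative D) (at (m \<beta>)) \<and> D > 0"
      if "\<beta> \<in> {0..1}" "m \<beta> \<in> {0<..<1}" for \<beta>
    proof -
      have "\<forall>\<sigma>\<in>DeltaX. theta_of nu q qt \<sigma> \<in> {0<..<1} \<longrightarrow>
        (\<exists>D. (\<forall>\<^sub>F t in nhds (theta_of nu q qt \<sigma>). (\<lambda>s. KLD nu q qt s \<sigma>) differentiable at t)
           \<and> (deriv (\<lambda>s. KLD nu q qt s \<sigma>) has_real_derivative D) (at (theta_of nu q qt \<sigma>))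
           \<and> D > 0)" using A5 unfolding assumption_5_def by (rule conjunct2)
      from bspec[OF this sD[OF that(1)]] have
        "theta_of nu q qt (\<sigma>\<^sub>b \<beta>) \<in> {0<..<1} \<longrightarrow>
        (\<exists>D. (\<forall>\<^sub>F t in nhds (theta_of nu q qt (\<sigma>\<^sub>b \<beta>)). (\<lambda>s. KLD nu q qt s (\<sigma>\<^sub>b \<beta>)) differentiable at t)
           \<and> (deriv (\<lambda>s. KLD nu q qt s (\<sigma>\<^sub>b \<beta>)) has_real_derivative D) (at (theta_of nu q qt (\<sigma>\<^sub>b \<beta>)))
           \<and> D > 0)" .
      then show ?thesis using that(2) unfolding Keq m_def \<theta>_def by (rule mp)
    qed
  qed
  have m1: "\<theta> \<sigma> = m 1" and m0: "\<theta> \<sigma>' = m 0" by (simp_all add: m_def \<sigma>\<^sub>b_def)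
  have P1: "\<theta> \<sigma> = \<theta> \<sigma>' \<longrightarrow> (\<forall>\<beta>\<in>{0..1}. \<theta> (\<sigma>\<^sub>b \<beta>) = \<theta> \<sigma>)"
  proof (intro impI ballI)
    fix \<beta> :: real assume e: "\<theta> \<sigma> = \<theta> \<sigma>'" and b: "\<beta> \<in> {0..1}"
    have "m \<beta> = m 1" by (rule convex_level[of 0 1]) (use b e m1 m0 in auto)
    then show "\<theta> (\<sigma>\<^sub>b \<beta>) = \<theta> \<sigma>" using m1 by (simp add: m_def)
  qed
  have P2: "\<theta> \<sigma>' < \<theta> \<sigma> \<longrightarrow> mono_on {0..1} (\<lambda>\<beta>. \<theta> (\<sigma>\<^sub>b \<beta>))"
    using m_mono m1 m0 unfolding m_def by auto
  have P3: "\<theta> \<sigma>' < \<theta> \<sigma> \<longrightarrow> (\<forall>\<beta>1\<in>{0..1}. \<forall>\<beta>2\<in>{0..1}. \<beta>1 < \<beta>2 \<longrightarrow>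
             \<theta> (\<sigma>\<^sub>b \<beta>1) \<in> {0<..<1} \<longrightarrow> \<theta> (\<sigma>\<^sub>b \<beta>1) < \<theta> (\<sigma>\<^sub>b \<beta>2))"
    using m_strict m1 m0 unfolding m_def by auto
  show ?thesis using P1 P2 P3 by blast
qed

end
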